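(* Let $K$ be a biquadratic bicyclic number field. Then $$(\{\rho_0\mathcal{O}_K:\rho_0\in K,\ \rho_0^2\in\mathbb{Q}\}:j_{\mathbb{Q}}^K(\mathcal P_{\mathbb{Q}}))=\begin{cases}4&\text{if }\sqrt{-1}\notin K,\\2&\text{if }\sqrt{-1}\in K.\end{cases}$$
   Context: $j_{\mathbb{Q}}^K(\mathcal P_{\mathbb{Q}})=\{x\mathcal{O}_K:x\in\mathbb{Q}^\times\}$, the group of fractional ideals of $K$ generated by nonzero rationals; both groups are subgroups of the group of nonzero fractional ideals of $K$. *)

theory Defs
  imports "HOL-Computational_Algebra.Polynomial" Complex_Main
begin

text \<open>Number fields are taken as subfields of the complex numbers.
A biquadratic bicyclic field is K = Q(sqrt a, sqrt b) with a, b, ab non-squares.\<close>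

definition is_int_square :: "int \<Rightarrow> bool" where
  "is_int_square a \<longleftrightarrow> (\<exists>c::int. a = c * c)"

definition quad_field2 :: "int \<Rightarrow> int \<Rightarrow> complex set" where
  "quad_field2 a b = {p + q * csqrt (of_int a) + r * csqrt (of_int b)
        + s * csqrt (of_int a) * csqrt (of_int b) | p q r s.
        p \<in> \<rat> \<and> q \<in> \<rat> \<and> r \<in> \<rat> \<and> s \<in> \<rat>}"

definition biquadratic_bicyclic :: "complex set \<Rightarrow> bool" where
  "biquadratic_bicyclic K \<longleftrightarrow> (\<exists>a b :: int.
     \<not> is_int_square a \<and> \<not> is_int_square b \<and> \<not> is_int_square (a * b) \<and>
     K = quad_field2 a b)"

definition algebraic_integer :: "complex \<Rightarrow> bool" where
  "algebraic_integer x \<longleftrightarrow> (\<exists>p :: complex poly.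
     lead_coeff p = 1 \<and> (\<forall>i. coeff p i \<in> \<int>) \<and> poly p x = 0)"

definition ring_of_integers :: "complex set \<Rightarrow> complex set" where
  "ring_of_integers K = {x \<in> K. algebraic_integer x}"

definition princ_ideal :: "complex set \<Rightarrow> complex \<Rightarrow> complex set" where
  "princ_ideal K x = (\<lambda>\<alpha>. x * \<alpha>) ` ring_of_integers K"

definition ideal_mult :: "complex set \<Rightarrow> complex set \<Rightarrow> complex set" where
  "ideal_mult I J = {s. \<exists>(n::nat) f g. (\<forall>i<n. f i \<in> I \<and> g i \<in> J) \<and> s = (\<Sum>i<n. f i * g i)}"

definition ideal_group_index :: "complex set set \<Rightarrow> complex set set \<Rightarrow> nat" where
  "ideal_group_index G H = card ((\<lambda>I. (\<lambda>J. ideal_mult I J) ` H) ` G)"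

definition sqrt_rat_ideals :: "complex set \<Rightarrow> complex set set" where
  "sqrt_rat_ideals K = {princ_ideal K \<rho> | \<rho>. \<rho> \<in> K \<and> \<rho> \<noteq> 0 \<and> \<rho>^2 \<in> \<rat>}"

text \<open>j_Q^K(P_Q): ideals x O_K with x a nonzero rational.\<close>
definition rat_ideals :: "complex set \<Rightarrow> complex set set" where
  "rat_ideals K = {princ_ideal K x | x. x \<in> \<rat> \<and> x \<noteq> 0}"

end

theory Submission
  imports Defs "Jordan_Normal_Form.Char_Poly" "HOL-Library.Nat_Bijection"
begin


definition eigrep :: "complex \<Rightarrow> bool" where
 "eigrep x \<longleftrightarrow> (\<exists>(I::nat set) (A::nat\<Rightarrow>nat\<Rightarrow>int) v. finite I \<and> (\<exists>i\<in>I. v i \<noteq> 0) \<and>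
     (\<forall>i\<in>I. x * v i = (\<Sum>j\<in>I. of_int (A i j) * v j)))"

lemma eigrep_imp_alg: assumes "eigrep x" shows "algebraic_int x"
proof -
  from assms obtain I :: "nat set" and A :: "nat \<Rightarrow> nat \<Rightarrow> int" and v :: "nat \<Rightarrow> complex" where I: "finite I" and nz: "\<exists>i\<in>I. v i \<noteq> 0"
    and ev: "\<forall>i\<in>I. x * v i = (\<Sum>j\<in>I. of_int (A i j) * v j)" unfolding eigrep_def by blast
  define n where "n = card I"
  obtain f where f: "bij_betw f {0..<n} I" using ex_bij_betw_nat_finite[OF I] n_def by blast
  define MB :: "int mat" where "MB = mat n n (\<lambda>(i,j). A (f i) (f j))"
  define M :: "complex mat" where "M = map_mat of_int MB"
  define w :: "complex vec" where "w = vec n (\<lambda>i. v (f i))"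
  have MB: "MB \<in> carrier_mat n n" unfolding MB_def by simp
  have M: "M \<in> carrier_mat n n" unfolding M_def using MB by simp
  have "eigenvector M w x" unfolding eigenvector_def
  proof (intro conjI)
    show "w \<in> carrier_vec (dim_row M)" using M unfolding w_def by simp
    from nz obtain i where i: "i \<in> I" "v i \<noteq> 0" by blast
    then obtain k where k: "k < n" "f k = i" using f unfolding bij_betw_def by auto
    show "w \<noteq> 0\<^sub>v (dim_row M)"
    proof
      assume "w = 0\<^sub>v (dim_row M)"
      hence "w $ k = 0" using M k by simp
      thus False using k i unfolding w_def by simp
    qed
    show "M *\<^sub>v w = x \<cdot>\<^sub>v w"
    proof (rule eq_vecI)
      fix i assume "i < dim_vec (x \<cdot>\<^sub>v w)"
      hence i: "i < n" unfolding w_def by simp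
      have "(M *\<^sub>v w) $ i = (\<Sum>j=0..<n. of_int (A (f i) (f j)) * v (f j))"
        using i M unfolding M_def MB_def w_def by (simp add: mult_mat_vec_def scalar_prod_def)
      also have "\<dots> = (\<Sum>j\<in>I. of_int (A (f i) j) * v j)"
        using sum.reindex_bij_betw[OF f, of "\<lambda>j. of_int (A (f i) j) * v j"] by simp
      also have "\<dots> = x * v (f i)" using ev f i unfolding bij_betw_def by auto
      finally show "(M *\<^sub>v w) $ i = (x \<cdot>\<^sub>v w) $ i" using i unfolding w_def by simp
    qed (simp add: w_def M_def MB_def)
  qed
  hence "eigenvalue M x" unfolding eigenvalue_def by blast
  hence "poly (char_poly M) x = 0" using eigenvalue_root_char_poly[OF M] by simp
  moreover have "char_poly M = map_poly of_int (char_poly MB)"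
    unfolding M_def by (rule of_int_hom.char_poly_hom[OF MB])
  moreover have "lead_coeff (char_poly MB) = 1" using degree_monic_char_poly[OF MB] by simp
  ultimately show ?thesis unfolding algebraic_int_altdef_ipoly by auto
qed

lemma alg_imp_eigrep: assumes "algebraic_int x" shows "eigrep x"
proof -
  from assms obtain p :: "int poly" where p0: "poly (map_poly of_int p) x = 0" and lc: "lead_coeff p = 1"
    unfolding algebraic_int_altdef_ipoly by blast
  define n where "n = degree p"
  have n: "n > 0"
  proof (rule ccontr)
    assume "\<not> n > 0"
    hence "degree p = 0" unfolding n_def by simp
    hence "p = [:1:]" using lc degree_0_id[of p] by simp
    thus False using p0 by simp
  qed
  define A :: "nat \<Rightarrow> nat \<Rightarrow> int" where "A = (\<lambda>i j. if i + 1 < n then (if j = i + 1 then 1 else 0) else - coeff p j)"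
  define v where "v = (\<lambda>i::nat. x ^ i)"
  have H: "x * v i = (\<Sum>j\<in>{..<n}. of_int (A i j) * v j)" if i: "i \<in> {..<n}" for i
  proof (cases "i + 1 < n")
    case T: True
    have "(\<Sum>j\<in>{..<n}. of_int (A i j) * v j) = (\<Sum>j\<in>{..<n}. if j = i + 1 then v j else 0)"
      by (rule sum.cong) (use T in \<open>auto simp: A_def\<close>)
    also have "\<dots> = v (i+1)" using T by simp
    finally show ?thesis by (simp add: v_def)
  next
    case F: False
    hence ii: "i + 1 = n" using i by auto
    have "0 = poly (map_poly of_int p) x" using p0 by simp
    also have "\<dots> = (\<Sum>j\<le>n. of_int (coeff p j) * x ^ j)"
      by (simp add: poly_altdef n_def coeff_map_poly degree_map_poly)
    also have "\<dots> = (\<Sum>j<n. of_int (coeff p j) * x ^ j) + x ^ n"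
    proof -
      have "{..n} = insert n {..<n}" by auto
      thus ?thesis using lc by (simp add: n_def)
    qed
    finally have "x ^ n = - (\<Sum>j<n. of_int (coeff p j) * x ^ j)" by (simp add: eq_neg_iff_add_eq_0 algebra_simps)
    also have "\<dots> = (\<Sum>j\<in>{..<n}. of_int (A i j) * v j)"
      using F by (simp add: A_def v_def flip: sum_negf)
    finally show ?thesis using ii by (simp add: v_def flip: power_Suc)
  qed
  have H2: "\<forall>i\<in>{..<n}. x * v i = (\<Sum>j\<in>{..<n}. of_int (A i j) * v j)" using H by blast
  have H1: "\<exists>i\<in>{..<n}. v i \<noteq> 0" using n by (intro bexI[of _ 0]) (auto simp: v_def)
  have H0: "finite {..<n}" by simp
  show ?thesis unfolding eigrep_def by (intro exI[of _ "{..<n}"] exI[of _ A] exI[of _ v] conjI H0 H1 H2)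
qed

lemma eigrep_mult: assumes "eigrep x" "eigrep y" shows "eigrep (x * y)"
proof -
  from assms(1) obtain I :: "nat set" and A :: "nat \<Rightarrow> nat \<Rightarrow> int" and v :: "nat \<Rightarrow> complex" where I: "finite I" and nzv: "\<exists>i\<in>I. v i \<noteq> 0"
    and ev: "\<forall>i\<in>I. x * v i = (\<Sum>j\<in>I. of_int (A i j) * v j)" unfolding eigrep_def by blast
  from assms(2) obtain J :: "nat set" and B :: "nat \<Rightarrow> nat \<Rightarrow> int" and w :: "nat \<Rightarrow> complex" where J: "finite J" and nzw: "\<exists>i\<in>J. w i \<noteq> 0"
    and ew: "\<forall>i\<in>J. y * w i = (\<Sum>j\<in>J. of_int (B i j) * w j)" unfolding eigrep_def by blast
  define L where "L = prod_encode ` (I \<times> J)"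
  define C where "C = (\<lambda>k l. A (fst (prod_decode k)) (fst (prod_decode l)) * B (snd (prod_decode k)) (snd (prod_decode l)))"
  define u where "u = (\<lambda>k. v (fst (prod_decode k)) * w (snd (prod_decode k)))"
  have inj: "inj_on prod_encode (I \<times> J)" using inj_prod_encode inj_on_subset by blast
  have H2: "\<forall>k\<in>L. (x * y) * u k = (\<Sum>l\<in>L. of_int (C k l) * u l)"
  proof (intro ballI)
    fix k assume k: "k \<in> L"
    from k obtain i1 i2 where ii: "i1 \<in> I" "i2 \<in> J" "k = prod_encode (i1, i2)" unfolding L_def by auto
    have "(\<Sum>l\<in>L. of_int (C k l) * u l) = (\<Sum>(j1,j2)\<in>I \<times> J. (of_int (A i1 j1) * v j1) * (of_int (B i2 j2) * w j2))"
      unfolding L_def by (subst sum.reindex[OF inj]) (auto simp: C_def u_def ii intro!: sum.cong)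
    also have "\<dots> = (\<Sum>j1\<in>I. of_int (A i1 j1) * v j1) * (\<Sum>j2\<in>J. of_int (B i2 j2) * w j2)"
      by (simp add: sum_product sum.cartesian_product)
    also have "\<dots> = (x * v i1) * (y * w i2)" using ev ew ii by simp
    finally show "(x * y) * u k = (\<Sum>l\<in>L. of_int (C k l) * u l)" by (simp add: u_def ii mult_ac)
  qed
  have H1: "\<exists>k\<in>L. u k \<noteq> 0"
  proof -
    from nzv nzw obtain i1 i2 where "i1 \<in> I" "v i1 \<noteq> 0" "i2 \<in> J" "w i2 \<noteq> 0" by blast
    thus ?thesis unfolding L_def u_def by (intro bexI[of _ "prod_encode (i1,i2)"]) auto
  qed
  have H0: "finite L" using I J unfolding L_def by simp
  show ?thesis unfolding eigrep_def by (intro exI[of _ L] exI[of _ C] exI[of _ u] conjI H0 H1 H2)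
qed

lemma eigrep_add: assumes "eigrep x" "eigrep y" shows "eigrep (x + y)"
proof -
  from assms(1) obtain I :: "nat set" and A :: "nat \<Rightarrow> nat \<Rightarrow> int" and v :: "nat \<Rightarrow> complex" where I: "finite I" and nzv: "\<exists>i\<in>I. v i \<noteq> 0"
    and ev: "\<forall>i\<in>I. x * v i = (\<Sum>j\<in>I. of_int (A i j) * v j)" unfolding eigrep_def by blast
  from assms(2) obtain J :: "nat set" and B :: "nat \<Rightarrow> nat \<Rightarrow> int" and w :: "nat \<Rightarrow> complex" where J: "finite J" and nzw: "\<exists>i\<in>J. w i \<noteq> 0"
    and ew: "\<forall>i\<in>J. y * w i = (\<Sum>j\<in>J. of_int (B i j) * w j)" unfolding eigrep_def by blast
  define L where "L = prod_encode ` (I \<times> J)"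
  define C where "C = (\<lambda>k l. A (fst (prod_decode k)) (fst (prod_decode l)) * (if snd (prod_decode k) = snd (prod_decode l) then 1 else 0)
      + (if fst (prod_decode k) = fst (prod_decode l) then 1 else 0) * B (snd (prod_decode k)) (snd (prod_decode l)))"
  define u where "u = (\<lambda>k. v (fst (prod_decode k)) * w (snd (prod_decode k)))"
  have inj: "inj_on prod_encode (I \<times> J)" using inj_prod_encode inj_on_subset by blast
  have H2: "\<forall>k\<in>L. (x + y) * u k = (\<Sum>l\<in>L. of_int (C k l) * u l)"
  proof (intro ballI)
    fix k assume k: "k \<in> L"
    from k obtain i1 i2 where ii: "i1 \<in> I" "i2 \<in> J" "k = prod_encode (i1, i2)" unfolding L_def by auto
    have "(\<Sum>l\<in>L. of_int (C k l) * u l) = (\<Sum>(j1,j2)\<in>I \<times> J. (of_int (A i1 j1) * v j1) * (if i2 = j2 then w j2 else 0)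
       + (if i1 = j1 then v j1 else 0) * (of_int (B i2 j2) * w j2))"
      unfolding L_def by (subst sum.reindex[OF inj]) (auto simp: C_def u_def ii algebra_simps intro!: sum.cong)
    also have "\<dots> = (\<Sum>j1\<in>I. \<Sum>j2\<in>J. (of_int (A i1 j1) * v j1) * (if i2 = j2 then w j2 else 0))
       + (\<Sum>j1\<in>I. \<Sum>j2\<in>J. (if i1 = j1 then v j1 else 0) * (of_int (B i2 j2) * w j2))"
      by (simp only: sum.cartesian_product[symmetric] sum.distrib)
    also have "(\<Sum>j1\<in>I. \<Sum>j2\<in>J. (of_int (A i1 j1) * v j1) * (if i2 = j2 then w j2 else 0))
        = (\<Sum>j1\<in>I. (of_int (A i1 j1) * v j1) * w i2)"
      using ii J by (simp add: sum_distrib_left[symmetric] if_distrib cong: if_cong)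
    also have "\<dots> = (x * v i1) * w i2" using ev ii by (simp add: sum_distrib_right[symmetric])
    also have "(\<Sum>j1\<in>I. \<Sum>j2\<in>J. (if i1 = j1 then v j1 else 0) * (of_int (B i2 j2) * w j2))
        = (\<Sum>j2\<in>J. v i1 * (of_int (B i2 j2) * w j2))"
    proof -
      have e: "\<And>a b P. (if P then a else 0) * (b::complex) = (if P then a * b else 0)" by simp
      show ?thesis using ii I by (subst sum.swap) (simp add: e)
    qed
    also have "\<dots> = v i1 * (y * w i2)" using ew ii by (simp add: sum_distrib_left[symmetric])
    finally show "(x + y) * u k = (\<Sum>l\<in>L. of_int (C k l) * u l)" by (simp add: u_def ii algebra_simps)
  qed
  have H1: "\<exists>k\<in>L. u k \<noteq> 0"
  proof -
    from nzv nzw obtain i1 i2 where "i1 \<in> I" "v i1 \<noteq> 0" "i2 \<in> J" "w i2 \<noteq> 0" by blast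
    thus ?thesis unfolding L_def u_def by (intro bexI[of _ "prod_encode (i1,i2)"]) auto
  qed
  have H0: "finite L" using I J unfolding L_def by simp
  show ?thesis unfolding eigrep_def by (intro exI[of _ L] exI[of _ C] exI[of _ u] conjI H0 H1 H2)
qed

lemma algebraic_int_mult_c: "algebraic_int (x::complex) \<Longrightarrow> algebraic_int y \<Longrightarrow> algebraic_int (x * y)"
  using eigrep_mult alg_imp_eigrep eigrep_imp_alg by blast
lemma algebraic_int_add_c: "algebraic_int (x::complex) \<Longrightarrow> algebraic_int y \<Longrightarrow> algebraic_int (x + y)"
  using eigrep_add alg_imp_eigrep eigrep_imp_alg by blast


lemmas ofr = of_rat_add of_rat_minus of_rat_diff of_rat_mult of_rat_divide of_rat_power

lemma alg_int_iff: "algebraic_integer x \<longleftrightarrow> algebraic_int x"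
  unfolding algebraic_integer_def algebraic_int.simps by blast

lemma rat_sq_int:
  assumes "r \<in> \<rat>" "r^2 = (of_int t :: complex)" shows "is_int_square t"
proof -
  have "algebraic_int r"
    by (rule algebraic_int_root[where p = "monom 1 2" and y = "of_int t"])
       (use assms in \<open>auto simp: poly_monom degree_monom_eq\<close>)
  hence "r \<in> \<int>" using rational_algebraic_int_is_int assms(1) by blast
  then obtain c where c: "r = of_int c" by (auto elim: Ints_cases)
  hence "(of_int t :: complex) = of_int (c*c)" using assms(2) by (simp add: power2_eq_square)
  hence "t = c * c" using of_int_eq_iff by blast
  thus ?thesis unfolding is_int_square_def by blast
qed

lemma nsq_rat: "\<not> is_int_square t \<Longrightarrow> (of_int t :: complex) \<noteq> of_rat (c * c)"
  using rat_sq_int[of "of_rat c" t] by (auto simp: power2_eq_square of_rat_mult)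

lemma nsq_rat': "\<not> is_int_square t \<Longrightarrow> (of_int t :: rat) \<noteq> c * c"
  using nsq_rat[of t c] by (metis of_rat_eq_iff of_rat_of_int_eq)

lemma sq_not_rat: "z^2 = (of_int t::complex) \<Longrightarrow> \<not> is_int_square t \<Longrightarrow> z \<noteq> of_rat c"
  using nsq_rat[of t c] by (auto simp: power2_eq_square of_rat_mult)

lemma E_mult_gen:
  fixes X Y :: complex
  assumes "X^2 = A" "Y^2 = B"
  shows "(p + q*X + r*Y + s*X*Y) * (p' + q'*X + r'*Y + s'*X*Y) =
    (p*p' + q*q'*A + r*r'*B + s*s'*A*B) + (p*q' + q*p' + (r*s' + s*r')*B)*X
    + (p*r' + r*p' + (q*s' + s*q')*A)*Y + (p*s' + s*p' + q*r' + r*q')*X*Y"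
  unfolding assms[symmetric] by (simp add: power2_eq_square algebra_simps)

lemma one_nz:
  fixes p q r s A B :: rat
  assumes A: "A \<noteq> 0" and B: "B \<noteq> 0" and nsq: "\<forall>c. A \<noteq> c * c"
    and e1: "p*q + r*s*B = 0" and e2: "p*r + q*s*A = 0" and e3: "p*s + q*r = 0"
  shows "(q=0 \<and> r=0 \<and> s=0) \<or> (p=0 \<and> r=0 \<and> s=0) \<or> (p=0 \<and> q=0 \<and> s=0) \<or> (p=0 \<and> q=0 \<and> r=0)"
proof -
  have all4: False if "p \<noteq> 0" "q \<noteq> 0" "r \<noteq> 0" "s \<noteq> 0"
  proof -
    have "p * (p*r + q*s*A) = 0" using e2 by simp
    moreover have "p*s = -(q*r)" using e3 by (simp add: eq_neg_iff_add_eq_0)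
    ultimately have "p*p*r - q*q*r*A = 0"
      by (metis (no_types, lifting) add_uminus_conv_diff distrib_left minus_mult_left mult.assoc mult.left_commute)
    hence "r * (p*p - q*q*A) = 0" by (simp add: algebra_simps)
    hence "p*p = q*q*A" using that by simp
    hence "A = (p/q) * (p/q)" using that by (simp add: field_simps)
    thus False using nsq by blast
  qed
  have h1: "r \<noteq> 0 \<and> s \<noteq> 0" if "p \<noteq> 0" "q \<noteq> 0" using e1 that B by auto
  have h2: "q \<noteq> 0 \<and> s \<noteq> 0" if "p \<noteq> 0" "r \<noteq> 0" using e2 that A by auto
  have h3: "q \<noteq> 0 \<and> r \<noteq> 0" if "p \<noteq> 0" "s \<noteq> 0" using e3 that by (auto simp: add_eq_0_iff)
  have h4: "p \<noteq> 0 \<and> s \<noteq> 0" if "q \<noteq> 0" "r \<noteq> 0" using e3 e2 that A by (auto simp: add_eq_0_iff)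
  have h5: "p \<noteq> 0 \<and> r \<noteq> 0" if "q \<noteq> 0" "s \<noteq> 0" using e2 e1 that A B by (auto simp: add_eq_0_iff)
  have h6: "p \<noteq> 0 \<and> q \<noteq> 0" if "r \<noteq> 0" "s \<noteq> 0" using e1 e3 that B by (auto simp: add_eq_0_iff)
  show ?thesis using all4 h1 h2 h3 h4 h5 h6 by blast
qed

lemma g1: "((r::complex) + s*X) * (r - s*X) = r*r - s*s*(X*X)" by (simp add: algebra_simps)
lemma g2: "((p::complex) + q*X)*(r - s*X) = (p*r - q*s*(X*X)) + (q*r - p*s)*X" by (simp add: algebra_simps)
lemma g3: "((u::complex) + v*X)*(u + v*X) = (u*u + v*v*(X*X)) + 2*u*v*X" by (simp add: algebra_simps)

context
  fixes a b :: int
  assumes na: "\<not> is_int_square a" and nb: "\<not> is_int_square b" and nab: "\<not> is_int_square (a*b)"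
begin

abbreviation "sa \<equiv> csqrt (of_int a :: complex)"
abbreviation "sb \<equiv> csqrt (of_int b :: complex)"
abbreviation "KK \<equiv> quad_field2 a b"
abbreviation "E p q r s \<equiv> of_rat p + of_rat q * sa + of_rat r * sb + of_rat s * sa * sb"

lemma a_nz: "a \<noteq> 0" using na unfolding is_int_square_def by auto
lemma b_nz: "b \<noteq> 0" using nb unfolding is_int_square_def by auto
lemma sa2: "sa * sa = of_int a" by (metis power2_csqrt power2_eq_square)
lemma sb2: "sb * sb = of_int b" by (metis power2_csqrt power2_eq_square)
lemma sa_nz: "sa \<noteq> 0" using a_nz by simp
lemma sb_nz: "sb \<noteq> 0" using b_nz by simp

lemma K_iff: "x \<in> KK \<longleftrightarrow> (\<exists>p q r s. x = E p q r s)"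
proof
  assume "x \<in> KK"
  then obtain p q r s where "x = p + q * sa + r * sb + s * sa * sb" "p \<in> \<rat>" "q \<in> \<rat>" "r \<in> \<rat>" "s \<in> \<rat>"
    unfolding quad_field2_def by blast
  thus "\<exists>p q r s. x = E p q r s" unfolding Rats_def by blast
next
  assume "\<exists>p q r s. x = E p q r s"
  then obtain p q r s where "x = E p q r s" by blast
  thus "x \<in> KK" unfolding quad_field2_def by (intro CollectI exI[of _ "of_rat p"] exI[of _ "of_rat q"] exI[of _ "of_rat r"] exI[of _ "of_rat s"]) auto
qed

lemma E_add: "E p q r s + E p' q' r' s' = E (p+p') (q+q') (r+r') (s+s')"
  by (simp add: ofr algebra_simps)

lemma E_mult: "E p q r s * E p' q' r' s' =
   E (p*p' + q*q'*of_int a + r*r'*of_int b + s*s'*of_int a*of_int b)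
     (p*q' + q*p' + (r*s' + s*r')*of_int b) (p*r' + r*p' + (q*s' + s*q')*of_int a)
     (p*s' + s*p' + q*r' + r*q')"
  by (subst E_mult_gen[OF power2_csqrt power2_csqrt]) (simp add: ofr)

lemma E_scale: "of_rat c * E p q r s = E (c*p) (c*q) (c*r) (c*s)"
  by (simp add: ofr algebra_simps)

lemma K_add: "x \<in> KK \<Longrightarrow> y \<in> KK \<Longrightarrow> x + y \<in> KK"
  unfolding K_iff using E_add by metis
lemma K_mult: "x \<in> KK \<Longrightarrow> y \<in> KK \<Longrightarrow> x * y \<in> KK"
  unfolding K_iff using E_mult by metis
lemma K_scale: "x \<in> KK \<Longrightarrow> of_rat c * x \<in> KK"
  unfolding K_iff using E_scale by metis
lemma K_rat: "of_rat c \<in> KK"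
  unfolding K_iff by (rule exI[of _ c], rule exI[of _ 0], rule exI[of _ 0], rule exI[of _ 0]) simp
lemma K_sa: "sa \<in> KK"
  unfolding K_iff by (rule exI[of _ 0], rule exI[of _ 1], rule exI[of _ 0], rule exI[of _ 0]) simp
lemma K_sb: "sb \<in> KK"
  unfolding K_iff by (rule exI[of _ 0], rule exI[of _ 0], rule exI[of _ 1], rule exI[of _ 0]) simp
lemma K_sab: "sa * sb \<in> KK"
  unfolding K_iff by (rule exI[of _ 0], rule exI[of _ 0], rule exI[of _ 0], rule exI[of _ 1]) simp
lemma K_1: "1 \<in> KK" using K_rat[of 1] by simp
lemma K_0: "0 \<in> KK" using K_rat[of 0] by simp

lemma sa_nr: "sa \<noteq> of_rat c" using sq_not_rat[of sa a] na by simp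
lemma sb_nr: "sb \<noteq> of_rat c" using sq_not_rat[of sb b] nb by simp

lemma lin2: "of_rat x + of_rat y * sa = 0 \<Longrightarrow> x = 0 \<and> y = 0"
proof -
  assume h: "of_rat x + of_rat y * sa = 0"
  have "y = 0"
  proof (rule ccontr)
    assume y: "y \<noteq> 0"
    hence "sa = of_rat (- x / y)" using h by (simp add: ofr field_simps eq_neg_iff_add_eq_0 add.commute)
    thus False using sa_nr by blast
  qed
  thus ?thesis using h by simp
qed

lemma sb_notin: "sb \<noteq> of_rat u + of_rat v * sa"
proof
  assume h: "sb = of_rat u + of_rat v * sa"
  have "of_int b = sb * sb" using sb2 by simp
  also have "\<dots> = (of_rat u + of_rat v * sa) * (of_rat u + of_rat v * sa)" using h by simp
  also have "\<dots> = of_rat (u*u + v*v*of_int a) + of_rat (2*u*v) * sa"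
    unfolding g3 sa2 by (simp add: ofr)
  finally have eq: "of_rat (u*u + v*v*of_int a - of_int b) + of_rat (2*u*v) * sa = 0"
    by (simp add: ofr algebra_simps)
  from lin2[OF eq] have e1: "u*u + v*v*of_int a = of_int b" and e2: "2*u*v = 0" by auto
  show False
  proof (cases "u = 0")
    case True
    hence "of_int (a*b) = (v * of_int a) * (v * of_int a)" using e1 by (simp add: algebra_simps)
    thus False using nsq_rat'[OF nab] by blast
  next
    case False
    hence "v = 0" using e2 by simp
    hence "sb = of_rat u" using h by simp
    thus False using sb_nr by blast
  qed
qed

lemma E_0: assumes h: "E p q r s = 0" shows "p = 0 \<and> q = 0 \<and> r = 0 \<and> s = 0"
proof (cases "r = 0 \<and> s = 0")
  case True
  hence "of_rat p + of_rat q * sa = 0" using h by simp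
  with lin2 True show ?thesis by blast
next
  case False
  define N where "N = r*r - s*s*of_int a"
  have N: "N \<noteq> 0"
  proof
    assume N0: "N = 0"
    show False
    proof (cases "s = 0")
      case True thus False using N0 False unfolding N_def by simp
    next
      case s: False
      hence "of_int a = (r/s) * (r/s)" using N0 unfolding N_def by (simp add: field_simps)
      thus False using nsq_rat'[OF na] by blast
    qed
  qed
  define X where "X = of_rat p + of_rat q * sa"
  define R where "R = of_rat r + of_rat s * sa"
  define Rc where "Rc = of_rat r - of_rat s * sa"
  define P1 where "P1 = p*r - q*s*of_int a"
  define Q1 where "Q1 = q*r - p*s"
  have h2: "X + sb * R = 0" using h unfolding X_def R_def by (simp add: algebra_simps)
  have "(X + sb * R) * Rc = 0" using h2 by simp
  hence m: "X * Rc + sb * (R * Rc) = 0" by (simp add: algebra_simps)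
  have RR: "R * Rc = of_rat N"
    unfolding R_def Rc_def N_def g1 sa2 by (simp add: ofr)
  have XR: "X * Rc = of_rat P1 + of_rat Q1 * sa"
    unfolding X_def Rc_def P1_def Q1_def g2 sa2 by (simp add: ofr)
  have "sb * of_rat N = - of_rat P1 - of_rat Q1 * sa" using m unfolding RR XR
    by (simp add: eq_neg_iff_add_eq_0 algebra_simps)
  moreover have NN: "(of_rat N :: complex) \<noteq> 0" using N by simp
  ultimately have "sb = (- of_rat P1 - of_rat Q1 * sa) / of_rat N" by (simp add: eq_divide_eq)
  also have "\<dots> = of_rat (- P1 / N) + of_rat (- Q1 / N) * sa" using NN by (simp add: ofr field_simps)
  finally show ?thesis using sb_notin by blast
qed

lemma classify:
  assumes "\<rho> \<in> KK" "\<rho> \<noteq> 0" "\<rho>^2 \<in> \<rat>"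
  shows "\<exists>c. c \<noteq> 0 \<and> (\<rho> = of_rat c \<or> \<rho> = of_rat c * sa \<or> \<rho> = of_rat c * sb \<or> \<rho> = of_rat c * (sa * sb))"
proof -
  obtain p q r s where rho: "\<rho> = E p q r s" using assms(1) K_iff by blast
  obtain t where t: "\<rho>^2 = of_rat t" using assms(3) unfolding Rats_def by blast
  have "E (p*p + q*q*of_int a + r*r*of_int b + s*s*of_int a*of_int b)
     (p*q + q*p + (r*s + s*r)*of_int b) (p*r + r*p + (q*s + s*q)*of_int a)
     (p*s + s*p + q*r + r*q) = of_rat t"
    using t rho E_mult[of p q r s p q r s] by (simp add: power2_eq_square)
  hence "E (p*p + q*q*of_int a + r*r*of_int b + s*s*of_int a*of_int b - t)
     (p*q + q*p + (r*s + s*r)*of_int b) (p*r + r*p + (q*s + s*q)*of_int a)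
     (p*s + s*p + q*r + r*q) = 0"
    by (simp add: ofr algebra_simps)
  from E_0[OF this] have "p*q + q*p + (r*s + s*r)*of_int b = 0" "p*r + r*p + (q*s + s*q)*of_int a = 0"
      "p*s + s*p + q*r + r*q = 0" by auto
  hence e: "p*q + r*s*of_int b = 0" "p*r + q*s*of_int a = 0" "p*s + q*r = 0" by (simp_all add: algebra_simps)
  have "(q=0 \<and> r=0 \<and> s=0) \<or> (p=0 \<and> r=0 \<and> s=0) \<or> (p=0 \<and> q=0 \<and> s=0) \<or> (p=0 \<and> q=0 \<and> r=0)"
    by (rule one_nz[OF _ _ _ e]) (use a_nz b_nz nsq_rat'[OF na] in auto)
  thus ?thesis using assms(2) rho by (elim disjE) (auto simp: mult.assoc)
qed

end

definition Cs :: "complex set \<Rightarrow> complex \<Rightarrow> complex set set" where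
  "Cs K x = (\<lambda>J. ideal_mult (princ_ideal K x) J) ` rat_ideals K"

lemma ii_not_rat: "\<i> \<noteq> (of_rat c :: complex)"
proof
  assume h: "\<i> = of_rat c"
  hence "(of_rat (c*c) :: complex) = -1" by (metis of_rat_mult power2_eq_square power2_i)
  hence "c * c = -1" by (metis of_rat_eq_iff of_rat_minus of_rat_1)
  moreover have "c * c \<ge> 0" by simp
  ultimately show False by simp
qed

context
  fixes a b :: int
  assumes na: "\<not> is_int_square a" and nb: "\<not> is_int_square b" and nab: "\<not> is_int_square (a*b)"
begin

abbreviation "RO \<equiv> ring_of_integers (quad_field2 a b)"
abbreviation "Q0 \<equiv> {q::complex. q \<in> \<rat> \<and> q \<noteq> 0}"

lemmas K_add' = K_add[OF na nb nab] and K_mult' = K_mult[OF na nb nab] and K_scale' = K_scale[OF na nb nab]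
  and K_1' = K_1[OF na nb nab] and K_sa' = K_sa[OF na nb nab] and K_sb' = K_sb[OF na nb nab]
  and K_sab' = K_sab[OF na nb nab]

lemma O_iff: "x \<in> RO \<longleftrightarrow> x \<in> quad_field2 a b \<and> algebraic_int x"
  unfolding ring_of_integers_def alg_int_iff by blast

lemma O_mult: "x \<in> RO \<Longrightarrow> y \<in> RO \<Longrightarrow> x * y \<in> RO"
  unfolding O_iff using K_mult' algebraic_int_mult_c by blast
lemma O_add: "x \<in> RO \<Longrightarrow> y \<in> RO \<Longrightarrow> x + y \<in> RO"
  unfolding O_iff using K_add' algebraic_int_add_c by blast
lemma O_1: "1 \<in> RO" unfolding O_iff using K_1' by simp
lemma O_0: "0 \<in> RO" unfolding O_iff using K_scale'[OF K_1', of 0] by simp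
lemma O_ii: "\<i> \<in> quad_field2 a b \<Longrightarrow> \<i> \<in> RO" unfolding O_iff by simp
lemma O_mii: "\<i> \<in> quad_field2 a b \<Longrightarrow> - \<i> \<in> RO" unfolding O_iff using K_scale'[of "\<i>" "-1"] by (simp add: of_rat_minus)

lemma O_sum: "(\<forall>i<(n::nat). f i \<in> RO \<and> g i \<in> RO) \<Longrightarrow> (\<Sum>i<n. f i * g i) \<in> RO"
proof (induction n)
  case 0 thus ?case using O_0 by simp
next
  case (Suc n) thus ?case using O_add O_mult by simp
qed

lemma princ_mult: "ideal_mult (princ_ideal (quad_field2 a b) x) (princ_ideal (quad_field2 a b) y) = princ_ideal (quad_field2 a b) (x*y)"
proof (intro equalityI subsetI)
  fix z assume "z \<in> ideal_mult (princ_ideal (quad_field2 a b) x) (princ_ideal (quad_field2 a b) y)"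
  then obtain n :: nat and f g where fg: "\<forall>i<n. f i \<in> princ_ideal (quad_field2 a b) x \<and> g i \<in> princ_ideal (quad_field2 a b) y"
    and z: "z = (\<Sum>i<n. f i * g i)" unfolding ideal_mult_def by blast
  have "\<forall>i\<in>{..<n}. \<exists>\<alpha>. \<alpha> \<in> RO \<and> f i = x * \<alpha>" using fg unfolding princ_ideal_def by blast
  from bchoice[OF this] obtain \<alpha> where al: "\<forall>i\<in>{..<n}. \<alpha> i \<in> RO \<and> f i = x * \<alpha> i" by blast
  have "\<forall>i\<in>{..<n}. \<exists>\<beta>. \<beta> \<in> RO \<and> g i = y * \<beta>" using fg unfolding princ_ideal_def by blast
  from bchoice[OF this] obtain \<beta> where be: "\<forall>i\<in>{..<n}. \<beta> i \<in> RO \<and> g i = y * \<beta> i" by blast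
  have "z = (\<Sum>i<n. (x*y) * (\<alpha> i * \<beta> i))" unfolding z using al be by (intro sum.cong) (auto simp: mult_ac)
  also have "\<dots> = (x*y) * (\<Sum>i<n. \<alpha> i * \<beta> i)" by (simp add: sum_distrib_left)
  finally have "z = (x*y) * (\<Sum>i<n. \<alpha> i * \<beta> i)" .
  moreover have "(\<Sum>i<n. \<alpha> i * \<beta> i) \<in> RO" using al be by (intro O_sum) auto
  ultimately show "z \<in> princ_ideal (quad_field2 a b) (x*y)" unfolding princ_ideal_def by blast
next
  fix z assume "z \<in> princ_ideal (quad_field2 a b) (x*y)"
  then obtain \<gamma> where g: "\<gamma> \<in> RO" "z = x*y*\<gamma>" unfolding princ_ideal_def by blast
  have "x * \<gamma> \<in> princ_ideal (quad_field2 a b) x" using g unfolding princ_ideal_def by blast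
  moreover have "y \<in> princ_ideal (quad_field2 a b) y" using O_1 unfolding princ_ideal_def by (intro image_eqI[of _ _ 1]) auto
  moreover have "z = x * \<gamma> * y" using g by (simp add: mult_ac)
  ultimately show "z \<in> ideal_mult (princ_ideal (quad_field2 a b) x) (princ_ideal (quad_field2 a b) y)"
    unfolding ideal_mult_def
    by (intro CollectI exI[of _ "1::nat"] exI[of _ "\<lambda>_::nat. x * \<gamma>"] exI[of _ "\<lambda>_::nat. y"]) simp
qed

lemma rat_ideals_eq: "rat_ideals (quad_field2 a b) = princ_ideal (quad_field2 a b) ` Q0"
  unfolding rat_ideals_def by blast

lemma Cs_eq: "Cs (quad_field2 a b) x = (\<lambda>q. princ_ideal (quad_field2 a b) (x*q)) ` Q0"
  unfolding Cs_def rat_ideals_eq image_image princ_mult ..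

lemma PU: assumes "u \<in> RO" "inverse u \<in> RO" "u \<noteq> 0"
  shows "princ_ideal (quad_field2 a b) (u*z) = princ_ideal (quad_field2 a b) z"
  unfolding princ_ideal_def
proof (intro equalityI subsetI)
  fix w assume "w \<in> (\<lambda>\<alpha>. u*z*\<alpha>) ` RO"
  then obtain \<alpha> where al: "\<alpha> \<in> RO" "w = u*z*\<alpha>" by blast
  thus "w \<in> (\<lambda>\<alpha>. z*\<alpha>) ` RO" using O_mult[OF assms(1) al(1)] by (intro image_eqI[of _ _ "u*\<alpha>"]) (auto simp: mult_ac)
next
  fix w assume "w \<in> (\<lambda>\<alpha>. z*\<alpha>) ` RO"
  then obtain \<alpha> where al: "\<alpha> \<in> RO" "w = z*\<alpha>" by blast
  thus "w \<in> (\<lambda>\<alpha>. u*z*\<alpha>) ` RO" using O_mult[OF assms(2) al(1)] assms(3)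
    by (intro image_eqI[of _ _ "inverse u*\<alpha>"]) (auto simp: field_simps)
qed

lemma CE2: assumes c: "c \<in> \<rat>" "c \<noteq> 0" and u: "u \<in> RO" "inverse u \<in> RO" "u \<noteq> 0"
  shows "Cs (quad_field2 a b) (c*u*y) = Cs (quad_field2 a b) y"
proof -
  have "Cs (quad_field2 a b) (c*u*y) = (\<lambda>q. princ_ideal (quad_field2 a b) (u*(y*(c*q)))) ` Q0"
    unfolding Cs_eq by (simp add: mult_ac)
  also have "\<dots> = (\<lambda>q. princ_ideal (quad_field2 a b) (y*q)) ` ((\<lambda>q. c*q) ` Q0)"
    unfolding PU[OF u] image_image ..
  also have "(\<lambda>q. c*q) ` Q0 = Q0"
  proof (intro equalityI subsetI)
    fix q assume "q \<in> (\<lambda>q. c*q) ` Q0" thus "q \<in> Q0" using c by auto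
  next
    fix q assume q: "q \<in> Q0"
    hence "q/c \<in> Q0" using c by auto
    moreover have "q = c * (q/c)" using c by simp
    ultimately show "q \<in> (\<lambda>q. c*q) ` Q0" by blast
  qed
  finally show ?thesis unfolding Cs_eq .
qed

lemma CE1: assumes "x \<noteq> 0" "y \<noteq> 0" "Cs (quad_field2 a b) x = Cs (quad_field2 a b) y"
  shows "\<exists>q. q \<in> \<rat> \<and> q \<noteq> 0 \<and> x/(y*q) \<in> RO \<and> (y*q)/x \<in> RO"
proof -
  have "princ_ideal (quad_field2 a b) (x*1) \<in> Cs (quad_field2 a b) x" unfolding Cs_eq by (rule image_eqI[of _ _ 1]) auto
  hence "princ_ideal (quad_field2 a b) x \<in> Cs (quad_field2 a b) y" using assms(3) by simp
  hence "princ_ideal (quad_field2 a b) x \<in> (\<lambda>q. princ_ideal (quad_field2 a b) (y*q)) ` Q0" unfolding Cs_eq .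
  then obtain q where q0: "q \<in> Q0" and eq: "princ_ideal (quad_field2 a b) x = princ_ideal (quad_field2 a b) (y*q)"
    by (rule imageE)
  from q0 have q: "q \<in> \<rat>" "q \<noteq> 0" by auto
  have "x \<in> princ_ideal (quad_field2 a b) x" using O_1 unfolding princ_ideal_def by (intro image_eqI[of _ _ 1]) auto
  hence "x \<in> princ_ideal (quad_field2 a b) (y*q)" using eq by simp
  then obtain \<alpha> where al: "\<alpha> \<in> RO" "x = y*q*\<alpha>" unfolding princ_ideal_def by blast
  have "y*q \<in> princ_ideal (quad_field2 a b) (y*q)" using O_1 unfolding princ_ideal_def by (intro image_eqI[of _ _ 1]) auto
  hence "y*q \<in> princ_ideal (quad_field2 a b) x" using eq by simp
  then obtain \<beta> where be: "\<beta> \<in> RO" "y*q = x*\<beta>" unfolding princ_ideal_def by blast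
  have "x/(y*q) = \<alpha>" using al(2) assms(2) q(2) by simp
  moreover have "(y*q)/x = \<beta>" using be(2) assms(1) by simp
  ultimately show ?thesis using al(1) be(1) q by (intro exI[of _ q]) simp
qed

lemma unit_sq: assumes "\<alpha> \<in> RO" "\<beta> \<in> RO" "\<alpha> * \<beta> = 1" "\<alpha>^2 \<in> \<rat>"
  shows "\<alpha>^2 = 1 \<or> \<alpha>^2 = -1"
proof -
  have "\<alpha>^2 \<in> RO" "\<beta>^2 \<in> RO" using O_mult assms by (simp_all add: power2_eq_square)
  hence ai: "algebraic_int (\<alpha>^2)" "algebraic_int (\<beta>^2)" unfolding O_iff by auto
  have "\<beta> = inverse \<alpha>" using assms(3) by (simp add: inverse_unique)
  hence "\<beta>^2 = inverse (\<alpha>^2)" by (simp add: power_inverse)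
  hence "\<beta>^2 \<in> \<rat>" using assms(4) by simp
  have "\<alpha>^2 \<in> \<int>" using rational_algebraic_int_is_int[OF ai(1) assms(4)] .
  then obtain m where m: "\<alpha>^2 = of_int m" by (elim Ints_cases)
  have "\<beta>^2 \<in> \<int>" using rational_algebraic_int_is_int[OF ai(2) \<open>\<beta>^2 \<in> \<rat>\<close>] .
  then obtain n where n: "\<beta>^2 = of_int n" by (elim Ints_cases)
  have "(\<alpha>*\<beta>)^2 = 1" using assms(3) by simp
  hence "(of_int (m*n) :: complex) = 1" using m n by (simp add: power_mult_distrib)
  hence "m * n = 1" using of_int_eq_1_iff by blast
  hence "m = 1 \<or> m = -1" using pos_zmult_eq_1_iff_lemma by blast
  thus ?thesis using m by auto
qed

lemma C_eq_sq: assumes "x \<noteq> 0" "y \<noteq> 0" "x^2 \<in> \<rat>" "y^2 \<in> \<rat>" "Cs (quad_field2 a b) x = Cs (quad_field2 a b) y"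
  shows "\<exists>q. q \<noteq> 0 \<and> ((x/y)^2 = of_rat (q*q) \<or> (x/y)^2 = - of_rat (q*q))"
proof -
  obtain q where q: "q \<in> \<rat>" "q \<noteq> 0" and o1: "x/(y*q) \<in> RO" and o2: "(y*q)/x \<in> RO"
    using CE1[OF assms(1,2,5)] by blast
  define \<alpha> where "\<alpha> = x/(y*q)"
  have prod: "\<alpha> * ((y*q)/x) = 1" unfolding \<alpha>_def using assms(1,2) q(2) by simp
  have "\<alpha>^2 = x^2 / (y^2 * q^2)" unfolding \<alpha>_def by (simp add: power_divide power_mult_distrib)
  moreover have "x^2 / (y^2 * q^2) \<in> \<rat>" using assms(3,4) q(1) by simp
  ultimately have "\<alpha>^2 \<in> \<rat>" by simp
  from unit_sq[OF o1[folded \<alpha>_def] o2 prod this] have al: "\<alpha>^2 = 1 \<or> \<alpha>^2 = -1" .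
  have xy: "(x/y)^2 = \<alpha>^2 * (q*q)" unfolding \<alpha>_def using q(2) by (simp add: power2_eq_square)
  from al have h: "(x/y)^2 = q*q \<or> (x/y)^2 = -(q*q)" unfolding xy by auto
  from q obtain q' where q': "q = of_rat q'" unfolding Rats_def by blast
  have "q' \<noteq> 0" using q(2) q' by simp
  moreover have "q*q = of_rat (q'*q')" using q' by (simp add: of_rat_mult)
  ultimately show ?thesis using h by (intro exI[of _ q']) simp
qed

lemma negsq_i: assumes "z \<in> quad_field2 a b" "z^2 = - of_rat (q*q)" "q \<noteq> 0"
  shows "\<i> \<in> quad_field2 a b"
proof -
  have "(z - \<i> * of_rat q) * (z + \<i> * of_rat q) = z^2 + of_rat (q*q)"
    by (simp add: algebra_simps power2_eq_square of_rat_mult)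
  also have "\<dots> = 0" using assms(2) by simp
  finally have "z = \<i> * of_rat q \<or> z = - (\<i> * of_rat q)" by (simp add: eq_neg_iff_add_eq_0)
  hence "\<i> = of_rat (1/q) * z \<or> \<i> = of_rat (-1/q) * z" using assms(3) by (auto simp: of_rat_divide of_rat_minus)
  thus ?thesis
  proof (elim disjE)
    assume "\<i> = of_rat (1/q) * z" thus ?thesis using K_scale'[OF assms(1), of "1/q"] by simp
  next
    assume "\<i> = of_rat (-1/q) * z" thus ?thesis using K_scale'[OF assms(1), of "-1/q"] by simp
  qed
qed

lemma Cs_ne: assumes "x \<noteq> 0" "y \<noteq> 0" "x^2 \<in> \<rat>" "y^2 \<in> \<rat>" "(x/y)^2 = of_int t"
  "z \<in> quad_field2 a b" "z^2 = of_int t" "\<not> is_int_square t" "\<i> \<notin> quad_field2 a b"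
  shows "Cs (quad_field2 a b) x \<noteq> Cs (quad_field2 a b) y"
proof
  assume "Cs (quad_field2 a b) x = Cs (quad_field2 a b) y"
  from C_eq_sq[OF assms(1-4) this] obtain q where q: "q \<noteq> 0"
    and h: "(x/y)^2 = of_rat (q*q) \<or> (x/y)^2 = - of_rat (q*q)" by blast
  show False
  proof (cases "(x/y)^2 = of_rat (q*q)")
    case True
    have "(of_int t :: complex) = of_rat (q*q)" by (rule trans[OF assms(5)[symmetric] True])
    thus False using nsq_rat[OF assms(8)] by blast
  next
    case False
    hence xy: "(x/y)^2 = - of_rat (q*q)" using h by blast
    have "z^2 = - of_rat (q*q)" by (rule trans[OF assms(7) trans[OF assms(5)[symmetric] xy]])
    from assms(9) negsq_i[OF assms(6) this q] show False by (rule notE)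
  qed
qed

abbreviation "ca \<equiv> csqrt (of_int a :: complex)"
abbreviation "cb \<equiv> csqrt (of_int b :: complex)"
abbreviation "CC \<equiv> Cs (quad_field2 a b)"
abbreviation "SS \<equiv> {\<rho>. \<rho> \<in> quad_field2 a b \<and> \<rho> \<noteq> 0 \<and> \<rho>^2 \<in> \<rat>}"

lemma a_nz': "a \<noteq> 0" using na unfolding is_int_square_def by auto
lemma b_nz': "b \<noteq> 0" using nb unfolding is_int_square_def by auto
lemma ca_nz: "ca \<noteq> 0" using a_nz' by simp
lemma cb_nz: "cb \<noteq> 0" using b_nz' by simp
lemma ca2: "ca^2 = of_int a" by simp
lemma cb2: "cb^2 = of_int b" by simp
lemma cab2: "(ca*cb)^2 = of_int (a*b)"
proof -
  have "(ca*cb)^2 = ca^2 * cb^2" by (rule power_mult_distrib)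
  also have "\<dots> = of_int a * of_int b" by simp
  also have "\<dots> = of_int (a*b)" by simp
  finally show ?thesis .
qed

lemma index_eq: "ideal_group_index (sqrt_rat_ideals (quad_field2 a b)) (rat_ideals (quad_field2 a b)) = card (CC ` SS)"
proof -
  have "sqrt_rat_ideals (quad_field2 a b) = princ_ideal (quad_field2 a b) ` SS"
    unfolding sqrt_rat_ideals_def by blast
  thus ?thesis unfolding ideal_group_index_def Cs_def by (simp add: image_image)
qed

lemma CE2': "c \<in> \<rat> \<Longrightarrow> c \<noteq> 0 \<Longrightarrow> CC (c * x) = CC x"
  using CE2[of c 1 x] O_1 by simp

lemma CE2i: "\<i> \<in> quad_field2 a b \<Longrightarrow> c \<in> \<rat> \<Longrightarrow> c \<noteq> 0 \<Longrightarrow> CC (c * \<i> * x) = CC x"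
  using CE2[of c "\<i>" x] O_ii O_mii by (simp add: inverse_eq_divide)

lemma SS_eq: "CC ` SS = CC ` {1, ca, cb, ca*cb}"
proof (intro equalityI subsetI)
  fix C assume "C \<in> CC ` SS"
  then obtain \<rho> where r: "\<rho> \<in> SS" "C = CC \<rho>" by blast
  from classify[OF na nb nab, of \<rho>] r(1) obtain c where c: "c \<noteq> 0"
    and d: "\<rho> = of_rat c \<or> \<rho> = of_rat c * ca \<or> \<rho> = of_rat c * cb \<or> \<rho> = of_rat c * (ca * cb)" by auto
  have cq: "(of_rat c :: complex) \<in> \<rat>" "(of_rat c :: complex) \<noteq> 0" using c by auto
  from d show "C \<in> CC ` {1, ca, cb, ca*cb}"
  proof (elim disjE)
    assume "\<rho> = of_rat c" thus ?thesis using r(2) CE2'[OF cq, of 1] by simp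
  next
    assume "\<rho> = of_rat c * ca" thus ?thesis using r(2) CE2'[OF cq, of ca] by simp
  next
    assume "\<rho> = of_rat c * cb" thus ?thesis using r(2) CE2'[OF cq, of cb] by simp
  next
    assume "\<rho> = of_rat c * (ca * cb)" thus ?thesis using r(2) CE2'[OF cq, of "ca*cb"] by simp
  qed
next
  fix C assume "C \<in> CC ` {1, ca, cb, ca*cb}"
  moreover have "{1, ca, cb, ca*cb} \<subseteq> SS"
    using K_1' K_sa' K_sb' K_sab' ca_nz cb_nz cab2 by auto
  ultimately show "C \<in> CC ` SS" by blast
qed

lemma Cs_ne': assumes "x \<noteq> 0" "y \<noteq> 0" "x^2 \<in> \<rat>" "y^2 \<in> \<rat>" "(x/y)^2 * of_rat (w*w) = of_int t" "w \<noteq> 0"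
  "z \<in> quad_field2 a b" "z^2 = of_int t" "\<not> is_int_square t" "\<i> \<notin> quad_field2 a b"
  shows "CC x \<noteq> CC y"
proof
  assume "CC x = CC y"
  from C_eq_sq[OF assms(1-4) this] obtain q where q: "q \<noteq> 0"
    and h: "(x/y)^2 = of_rat (q*q) \<or> (x/y)^2 = - of_rat (q*q)" by blast
  show False
  proof (cases "(x/y)^2 = of_rat (q*q)")
    case True
    have "(of_int t :: complex) = of_rat ((q*w)*(q*w))"
      unfolding assms(5)[symmetric] True by (simp add: of_rat_mult mult_ac)
    thus False using nsq_rat[OF assms(9)] by blast
  next
    case False
    hence xy: "(x/y)^2 = - of_rat (q*q)" using h by blast
    have "z^2 = - of_rat ((q*w)*(q*w))"
      unfolding assms(8) assms(5)[symmetric] xy by (simp add: of_rat_mult mult_ac)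
    moreover have "q * w \<noteq> 0" using q assms(6) by simp
    ultimately have "\<i> \<in> quad_field2 a b" by (rule negsq_i[OF assms(7)])
    with assms(10) show False by (rule notE)
  qed
qed

lemma Cs_ne1: assumes "x \<noteq> 0" "y \<noteq> 0" "x^2 \<in> \<rat>" "y^2 \<in> \<rat>" "(x/y)^2 = of_int t"
  "z \<in> quad_field2 a b" "z^2 = of_int t" "\<not> is_int_square t" "\<i> \<notin> quad_field2 a b"
  shows "CC x \<noteq> CC y"
  by (rule Cs_ne'[OF assms(1-4) _ _ assms(6-9), of 1]) (use assms(5) in simp_all)

lemma four: assumes "\<i> \<notin> quad_field2 a b" shows "card (CC ` {1, ca, cb, ca*cb}) = 4"
proof -
  have q: "(1::complex)^2 \<in> \<rat>" "ca^2 \<in> \<rat>" "cb^2 \<in> \<rat>" "(ca*cb)^2 \<in> \<rat>"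
    using cab2 by simp_all
  have abnz: "ca * cb \<noteq> 0" using ca_nz cb_nz by simp
  have n1: "CC ca \<noteq> CC 1" by (rule Cs_ne1[OF ca_nz _ q(2,1) _ K_sa' ca2 na assms]) simp_all
  have n2: "CC cb \<noteq> CC 1" by (rule Cs_ne1[OF cb_nz _ q(3,1) _ K_sb' cb2 nb assms]) simp_all
  have n3: "CC (ca*cb) \<noteq> CC 1" by (rule Cs_ne1[OF abnz _ q(4,1) _ K_sab' cab2 nab assms]) (use cab2 in simp_all)
  have n4: "CC (ca*cb) \<noteq> CC ca" 
    by (rule Cs_ne1[OF abnz ca_nz q(4,2) _ K_sb' cb2 nb assms]) (use ca_nz in simp)
  have n5: "CC (ca*cb) \<noteq> CC cb" 
    by (rule Cs_ne1[OF abnz cb_nz q(4,3) _ K_sa' ca2 na assms]) (use cb_nz in simp)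
  have n6: "CC ca \<noteq> CC cb"
  proof (rule Cs_ne'[OF ca_nz cb_nz q(2,3) _ _ K_sab' cab2 nab assms, of "of_int b"])
    show "(ca/cb)^2 * of_rat (of_int b * of_int b) = of_int (a*b)"
    proof -
      have e1: "(ca/cb)^2 = of_int a / of_int b" by (simp add: power_divide)
      have e2: "(of_rat (of_int b * of_int b) :: complex) = of_int b * of_int b" by (simp add: of_rat_mult)
      have bb: "(of_int b :: complex) \<noteq> 0" using b_nz' by simp
      show ?thesis unfolding e1 e2 using bb by (simp add: field_simps)
    qed
  qed (use b_nz' in simp)
  show ?thesis using n1 n2 n3 n4 n5 n6 not_sym[OF n1] not_sym[OF n2] not_sym[OF n3]
      not_sym[OF n4] not_sym[OF n5] not_sym[OF n6]
    by (simp add: card_insert_if)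
qed

lemma ii_sq: "\<i> = of_rat c * x \<Longrightarrow> x^2 = of_int t \<Longrightarrow> c^2 * of_int t = (-1::rat)"
proof -
  assume h: "\<i> = of_rat c * x" "x^2 = of_int t"
  have "(-1::complex) = \<i>^2" by simp
  also have "\<dots> = of_rat (c^2 * of_int t)" unfolding h(1) by (simp add: power_mult_distrib h(2) of_rat_mult of_rat_power)
  finally show ?thesis by (metis of_rat_eq_iff of_rat_minus of_rat_1)
qed

lemma key_rat: fixes c q S T :: rat assumes "c \<noteq> 0" "c^2 * S = -1" "T = -(q*q)"
  shows "S * T = (q/c)*(q/c)"
proof -
  have S: "S = -1/c^2" using assms(1,2) by (simp add: field_simps)
  show ?thesis unfolding S assms(3) using assms(1) by (simp add: field_simps power2_eq_square)
qed

lemma gen_cab: fixes X Y C A :: complex assumes "X*X = A" "A \<noteq> 0" "C \<noteq> 0"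
  shows "(1/(C*A)) * (C*(X*Y)) * X = Y"
proof -
  have X: "X \<noteq> 0" using assms(1,2) by auto
  show ?thesis unfolding assms(1)[symmetric] using X assms(3) by (simp add: field_simps)
qed

lemma sq_case: assumes ne: "CC x = CC 1" and x: "x \<noteq> 0" "x^2 = of_int t" and t: "\<not> is_int_square t"
  shows "\<exists>q. q \<noteq> 0 \<and> of_int t = - (q*q :: rat)"
proof -
  have xq: "x^2 \<in> \<rat>" using x(2) by simp
  have oq: "(1::complex)^2 \<in> \<rat>" by simp
  from C_eq_sq[OF x(1) one_neq_zero xq oq ne] obtain q where q: "q \<noteq> 0"
    and h0: "(x/1)^2 = of_rat (q*q) \<or> (x/1)^2 = - of_rat (q*q)" by blast
  have x1: "(x/1)^2 = of_int t" using x(2) by simp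
  have h: "(of_int t :: complex) = of_rat (q*q) \<or> (of_int t :: complex) = - of_rat (q*q)" using h0 unfolding x1 .
  have "(of_int t :: complex) \<noteq> of_rat (q*q)" using nsq_rat[OF t] .
  hence "(of_int t :: complex) = - of_rat (q*q)" using h by blast
  hence "of_rat (of_int t) = (of_rat (- (q*q)) :: complex)" by (simp add: of_rat_minus)
  hence "of_int t = - (q*q)" by (simp only: of_rat_eq_iff)
  thus ?thesis using q by blast
qed

lemma two: assumes ii: "\<i> \<in> quad_field2 a b" shows "card (CC ` {1, ca, cb, ca*cb}) = 2"
proof -
  from classify[OF na nb nab, of "\<i>"] ii obtain c where c: "c \<noteq> 0"
    and d: "\<i> = of_rat c \<or> \<i> = of_rat c * ca \<or> \<i> = of_rat c * cb \<or> \<i> = of_rat c * (ca * cb)" by auto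
  have cq: "(of_rat (1/c) :: complex) \<in> \<rat>" "(of_rat (1/c) :: complex) \<noteq> 0" using c by auto
  from d show ?thesis
  proof (elim disjE)
    assume "\<i> = of_rat c" thus ?thesis using ii_not_rat by blast
  next
    assume h: "\<i> = of_rat c * ca"
    have e1: "CC ca = CC 1" using CE2i[OF ii cq, of 1] c unfolding h by (simp add: of_rat_divide)
    have e2: "CC (ca*cb) = CC cb" using CE2i[OF ii cq, of cb] c unfolding h by (simp add: of_rat_divide mult_ac)
    have c2: "c^2 * of_int a = -1" using ii_sq[OF h ca2] .
    have ne: "CC cb \<noteq> CC 1"
    proof
      assume "CC cb = CC 1"
      from sq_case[OF this cb_nz cb2 nb] obtain q where "q \<noteq> 0" "of_int b = - (q*q :: rat)" by blast
      from key_rat[OF c c2 this(2)] have "of_int (a*b) = (q/c)*(q/c)" by simp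
      thus False using nsq_rat'[OF nab] by blast
    qed
    have "CC ` {1, ca, cb, ca*cb} = {CC 1, CC cb}" using e1 e2 by auto
    thus ?thesis using ne by simp
  next
    assume h: "\<i> = of_rat c * cb"
    have e1: "CC cb = CC 1" using CE2i[OF ii cq, of 1] c unfolding h by (simp add: of_rat_divide)
    have e2: "CC (ca*cb) = CC ca" using CE2i[OF ii cq, of ca] c unfolding h by (simp add: of_rat_divide mult_ac)
    have c2: "c^2 * of_int b = -1" using ii_sq[OF h cb2] .
    have ne: "CC ca \<noteq> CC 1"
    proof
      assume "CC ca = CC 1"
      from sq_case[OF this ca_nz ca2 na] obtain q where "q \<noteq> 0" "of_int a = - (q*q :: rat)" by blast
      from key_rat[OF c c2 this(2)] have "of_int (a*b) = (q/c)*(q/c)" by (simp add: mult.commute)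
      thus False using nsq_rat'[OF nab] by blast
    qed
    have "CC ` {1, ca, cb, ca*cb} = {CC 1, CC ca}" using e1 e2 by auto
    thus ?thesis using ne by simp
  next
    assume h: "\<i> = of_rat c * (ca * cb)"
    have e1: "CC (ca*cb) = CC 1" using CE2i[OF ii cq, of 1] c unfolding h by (simp add: of_rat_divide)
    have caca: "ca * ca = of_int a" by (metis power2_csqrt power2_eq_square)
    have cq2: "1/(of_rat c * of_int a) \<in> \<rat>" "1/(of_rat c * of_int a) \<noteq> (0::complex)" using c a_nz' by auto
    have g: "(1/(of_rat c * of_int a)) * (of_rat c * (ca*cb)) * ca = cb" by (rule gen_cab[OF caca]) (use c a_nz' in auto)
    have e2: "CC cb = CC ca" using CE2i[OF ii cq2, of ca] unfolding h g .
    have c2: "c^2 * of_int (a*b) = -1" using ii_sq[OF h cab2] .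
    have ne: "CC ca \<noteq> CC 1"
    proof
      assume "CC ca = CC 1"
      from sq_case[OF this ca_nz ca2 na] obtain q where "q \<noteq> 0" "of_int a = - (q*q :: rat)" by blast
      from key_rat[OF c c2 this(2)] have k: "of_int a * of_int a * of_int b = (q/c)*(q/c)" by (simp add: mult_ac)
      have "(of_int b :: rat) = (q/(c * of_int a))*(q/(c * of_int a))"
        using k c a_nz' by (simp add: field_simps)
      thus False using nsq_rat'[OF nb] by blast
    qed
    have "CC ` {1, ca, cb, ca*cb} = {CC 1, CC ca}" using e1 e2 by auto
    thus ?thesis using ne by simp
  qed
qed

lemma main_ab: "ideal_group_index (sqrt_rat_ideals (quad_field2 a b)) (rat_ideals (quad_field2 a b))
   = (if \<i> \<in> quad_field2 a b then 2 else 4)"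
  unfolding index_eq SS_eq using two four by simp


end

theorem mainTheorem9:
  fixes K :: "complex set"
  assumes "biquadratic_bicyclic K"
  shows "ideal_group_index (sqrt_rat_ideals K) (rat_ideals K) = (if \<i> \<in> K then 2 else 4)"
proof -
  from assms obtain a b :: int where "\<not> is_int_square a" "\<not> is_int_square b" "\<not> is_int_square (a * b)"
    and K: "K = quad_field2 a b" unfolding biquadratic_bicyclic_def by blast
  thus ?thesis using main_ab by blast
qed
end
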